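(* Let $k\in\mathbb{Z}$, let $n\ge 0$ be an integer, and let $m$ be an odd positive integer. Then $$G_{n}^{(k)}(x)=\sum_{l=0}^{n}\binom{n}{l}m^{l-1}\sum_{j=1}^{n-l+1}\sum_{s=0}^{m-1}(-1)^{s}G_{l}\Big(\frac{s+x}{m}\Big)\frac{1}{j^{k-1}}\frac{S_{1}(n-l+1,j)}{n-l+1}.$$
   Context: The Genocchi polynomials $G_n(x)$ are defined by $\frac{2t}{e^t+1}e^{xt}=\sum_{n=0}^{\infty}G_n(x)\frac{t^n}{n!}$. For $k\in\mathbb{Z}$, $\mathrm{Ei}_k(x)=\sum_{n=1}^{\infty}\frac{x^n}{n^k(n-1)!}$, and the poly-Genocchi polynomials $G_n^{(k)}(x)$ are defined by $\frac{2\,\mathrm{Ei}_k(\log(1+t))}{e^t+1}e^{xt}=\sum_{n=0}^{\infty}G_n^{(k)}(x)\frac{t^n}{n!}$. $S_1(n,m)$ are the signed Stirling numbers of the first kind: $\frac{(\log(1+t))^m}{m!}=\sum_{n=m}^{\infty}S_1(n,m)\frac{t^n}{n!}$. *)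

theory Defs
  imports "HOL-Computational_Algebra.Formal_Power_Series"
begin

definition genocchi_poly :: "nat \<Rightarrow> real \<Rightarrow> real" where
  "genocchi_poly n x =
     fact n * fps_nth ((fps_const 2 * fps_X * fps_exp x) / (fps_exp 1 + 1)) n"

definition Ei_fps :: "int \<Rightarrow> real fps" where
  "Ei_fps k = Abs_fps (\<lambda>n. if n = 0 then 0 else 1 / (real n powi k * fact (n - 1)))"

text \<open>Poly-Genocchi polynomials: 2 Ei_k(log(1+t))/(e^t+1) e^(xt) = sum G_n^(k)(x) t^n/n!;
  fps_ln 1 is the series of log(1+t)\<close>
definition poly_genocchi :: "int \<Rightarrow> nat \<Rightarrow> real \<Rightarrow> real" where
  "poly_genocchi k n x =
     fact n * fps_nth ((fps_const 2 * (Ei_fps k oo fps_ln 1) * fps_exp x) / (fps_exp 1 + 1)) n"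

definition stirling1 :: "nat \<Rightarrow> nat \<Rightarrow> real" where
  "stirling1 n m = fact n * fps_nth (fps_ln 1 ^ m / fps_const (fact m)) n"

end

theory Submission
  imports Defs
begin
unbundle fps_syntax

definition Hs :: "real \<Rightarrow> real \<Rightarrow> real fps" where
  "Hs c y = fps_const 2 * fps_X * fps_exp y * inverse (fps_exp c + 1)"

lemma gen_Hs: "genocchi_poly l x = fact l * Hs 1 x $ l"
  unfolding genocchi_poly_def Hs_def by (simp add: fps_divide_unit)

lemma Hs_compose: "Hs 1 y oo (fps_const c * fps_X) = fps_const c * Hs c (c*y)"
proof -
  have X0: "(fps_const c * fps_X) $ 0 = 0" by simp
  have e: "fps_exp y oo (fps_const c * fps_X) = fps_exp (c*y)"
    by (simp add: fps_compose_linear fps_eq_iff power_mult_distrib)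
  have d: "(fps_exp 1 + 1) oo (fps_const c * fps_X) = fps_exp c + (1::real fps)"
    by (simp add: fps_compose_linear fps_eq_iff)
  have x: "(fps_X :: real fps) oo (fps_const c * fps_X) = fps_const c * fps_X"
    by (simp add: fps_compose_linear fps_eq_iff; auto simp: le_Suc_eq)
  have x2: "(fps_const 2 :: real fps) oo (fps_const c * fps_X) = fps_const 2"
    by (simp add: fps_compose_linear fps_eq_iff)
  have i: "inverse (fps_exp 1 + 1) oo (fps_const c * fps_X) = inverse (fps_exp c + (1::real fps))"
    by (subst fps_inverse_compose[OF X0]) (simp_all add: d)
  show ?thesis unfolding Hs_def fps_compose_mult_distrib[OF X0] e i x x2
    by (simp only: mult_ac)
qed

lemma geom:
  assumes "odd m"
  shows "(fps_exp 1 + 1) * (\<Sum>s<m. (-1)^s * fps_exp (real s)) = fps_exp (real m) + (1::real fps)"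
proof -
  have "(\<Sum>s<m. (-1)^s * fps_exp (real s)) = (\<Sum>s<m. (- fps_exp 1)^s :: real fps)"
    by (intro sum.cong refl) (simp add: power_minus' fps_exp_power_mult flip: power_mult_distrib)
  moreover have "(1 - (- fps_exp 1 :: real fps)) * (\<Sum>s<m. (- fps_exp 1)^s) = 1 - (- fps_exp 1) ^ m"
    by (rule one_diff_power_eq[symmetric])
  ultimately show ?thesis using assms
    by (simp add: fps_exp_power_mult add.commute)
qed

lemma Hs_sum:
  assumes "odd m"
  shows "(\<Sum>s<m. (-1)^s * Hs (real m) (real s + x)) = Hs 1 x"
proof -
  let ?S = "(\<Sum>s<m. (-1)^s * fps_exp (real s)) :: real fps"
  let ?D = "fps_exp 1 + 1 :: real fps" and ?Dm = "fps_exp (real m) + 1 :: real fps"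
  have D0: "?D $ 0 \<noteq> 0" and Dm0: "?Dm $ 0 \<noteq> 0" by simp_all
  have key: "?S * inverse ?Dm = inverse ?D"
  proof -
    have "inverse ?D = inverse ?D * (?Dm * inverse ?Dm)" using inverse_mult_eq_1'[OF Dm0] by simp
    also have "\<dots> = inverse ?D * (?D * ?S) * inverse ?Dm" using geom[OF assms] by (simp add: mult.assoc)
    also have "\<dots> = (inverse ?D * ?D) * ?S * inverse ?Dm" by (simp add: mult.assoc)
    also have "\<dots> = ?S * inverse ?Dm" using inverse_mult_eq_1[OF D0] by simp
    finally show ?thesis by simp
  qed
  have "(\<Sum>s<m. (-1)^s * Hs (real m) (real s + x)) =
     fps_const 2 * fps_X * fps_exp x * (?S * inverse ?Dm)"
    unfolding Hs_def sum_distrib_left sum_distrib_right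
    by (intro sum.cong refl) (simp add: fps_exp_add_mult mult_ac)
  also have "\<dots> = Hs 1 x" unfolding key Hs_def by simp
  finally show ?thesis .
qed

lemma neg1_pow_nth: "((-1::real fps)^n * F) $ l = (-1)^n * F $ l"
proof -
  have "(-1::real fps)^n = fps_const ((-1)^n)" by (induction n) (simp_all add: fps_const_mult fps_const_neg flip: fps_const_mult)
  then show ?thesis by simp
qed

lemma mult_thm:
  assumes "odd m" "m > 0"
  shows "Hs 1 x $ l = real m powi (int l - 1) * (\<Sum>s=0..m-1. (-1)^s * Hs 1 ((real s + x)/real m) $ l)"
proof -
  have m0: "real m \<noteq> 0" using assms by simp
  have "real m ^ l * (\<Sum>s=0..m-1. (-1)^s * Hs 1 ((real s + x)/real m) $ l)
      = (\<Sum>s<m. (-1)^s * (real m ^ l * Hs 1 ((real s + x)/real m) $ l))"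
    using assms by (simp add: sum_distrib_left atLeast0AtMost lessThan_Suc_atMost[symmetric] mult_ac)
  also have "\<dots> = (\<Sum>s<m. (-1)^s * (real m * Hs (real m) (real s + x) $ l))"
  proof (intro sum.cong refl)
    fix s
    have "real m ^ l * Hs 1 ((real s + x)/real m) $ l = (Hs 1 ((real s + x)/real m) oo (fps_const (real m) * fps_X)) $ l"
      by simp
    also have "\<dots> = real m * Hs (real m) (real s + x) $ l"
      unfolding Hs_compose using m0 by simp
    finally show "(-1)^s * (real m ^ l * Hs 1 ((real s + x)/real m) $ l) = (-1)^s * (real m * Hs (real m) (real s + x) $ l)" by simp
  qed
  also have "\<dots> = real m * (\<Sum>s<m. (-1)^s * Hs (real m) (real s + x)) $ l"
    by (simp add: fps_sum_nth sum_distrib_left neg1_pow_nth mult_ac)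
  also have "\<dots> = real m * Hs 1 x $ l" using Hs_sum[OF assms(1)] by simp
  finally have "real m * Hs 1 x $ l = real m ^ l * (\<Sum>s=0..m-1. (-1)^s * Hs 1 ((real s + x)/real m) $ l)" by simp
  moreover have "real m powi (int l - 1) * real m = real m ^ l"
    using m0 by (simp add: power_int_diff)
  ultimately show ?thesis using m0
    by (metis (no_types, lifting) mult.assoc mult.commute mult_cancel_left)
qed

definition acoef :: "int \<Rightarrow> nat \<Rightarrow> real" where
  "acoef k p = (\<Sum>j=1..p+1. (1 / real j powi (k - 1)) * (stirling1 (p+1) j / real (p+1)))"

lemma Ei_comp_0: "(Ei_fps k oo fps_ln 1) $ 0 = 0"
  by (simp add: Ei_fps_def)

lemma Ei_comp_Suc: "(Ei_fps k oo fps_ln 1) $ Suc p = acoef k p / fact p"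
proof -
  let ?L = "fps_ln (1::real)"
  have "(Ei_fps k oo ?L) $ Suc p = (\<Sum>j=1..Suc p. Ei_fps k $ j * (?L ^ j) $ Suc p)"
    unfolding fps_compose_nth by (simp add: Ei_fps_def sum.atLeast_Suc_atMost)
  also have "\<dots> = (\<Sum>j=1..Suc p. (1 / real j powi (k - 1)) * (stirling1 (p+1) j / real (p+1)) / fact p)"
  proof (intro sum.cong refl)
    fix j assume j: "j \<in> {1..Suc p}"
    then obtain i where i: "j = Suc i" by (cases j) auto
    have pw: "real j powi k = real j powi (k - 1) * real j"
      using j by (simp add: power_int_diff)
    have fj: "(fact j :: real) = real j * fact (j - 1)" using i by simp
    have fN: "(fact (Suc p) :: real) = real (Suc p) * fact p" by simp
    have nz: "real j powi (k - 1) \<noteq> 0" using j by simp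
    show "Ei_fps k $ j * (?L ^ j) $ Suc p = (1 / real j powi (k - 1)) * (stirling1 (p+1) j / real (p+1)) / fact p"
      unfolding stirling1_def using j nz
      by (simp add: Ei_fps_def pw fj fN field_simps del: of_nat_Suc fact_Suc)
  qed
  also have "\<dots> = acoef k p / fact p"
    unfolding acoef_def by (simp only: sum_divide_distrib Suc_eq_plus1)
  finally show ?thesis .
qed

lemma Ei_comp: "Ei_fps k oo fps_ln 1 = fps_X * Abs_fps (\<lambda>p. acoef k p / fact p)"
proof (rule fps_ext)
  fix n show "(Ei_fps k oo fps_ln 1) $ n = (fps_X * Abs_fps (\<lambda>p. acoef k p / fact p)) $ n"
    by (cases n) (simp add: Ei_fps_def, simp add: Ei_comp_Suc)
qed

lemma pg_expand:
  "poly_genocchi k n x = (\<Sum>l=0..n. real (n choose l) * genocchi_poly l x * acoef k (n - l))"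
proof -
  let ?A = "Abs_fps (\<lambda>p. acoef k p / fact p)"
  have "poly_genocchi k n x = fact n * (Hs 1 x * ?A) $ n"
    unfolding poly_genocchi_def Ei_comp Hs_def by (simp add: fps_divide_unit mult_ac)
  also have "\<dots> = (\<Sum>l=0..n. fact n * (Hs 1 x $ l * (acoef k (n - l) / fact (n - l))))"
    by (simp add: fps_mult_nth sum_distrib_left)
  also have "\<dots> = (\<Sum>l=0..n. real (n choose l) * genocchi_poly l x * acoef k (n - l))"
  proof (intro sum.cong refl)
    fix l assume "l \<in> {0..n}"
    then have "l \<le> n" by simp
    then show "fact n * (Hs 1 x $ l * (acoef k (n - l) / fact (n - l))) = real (n choose l) * genocchi_poly l x * acoef k (n - l)"
      by (simp add: binomial_fact gen_Hs field_simps)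
  qed
  finally show ?thesis .
qed

theorem theorem6:
  fixes k :: int and n m :: nat and x :: real
  assumes "odd m" and "m > 0"
  shows "poly_genocchi k n x =
    (\<Sum>l=0..n. real (n choose l) * real m powi (int l - 1) *
      (\<Sum>j=1..n-l+1. \<Sum>s=0..m-1.
         (-1) ^ s * genocchi_poly l ((real s + x) / real m) *
         (1 / real j powi (k - 1)) * (stirling1 (n-l+1) j / real (n-l+1))))"
  unfolding pg_expand
proof (intro sum.cong refl)
  fix l
  have g: "genocchi_poly l x = real m powi (int l - 1) * (\<Sum>s=0..m-1. (-1)^s * genocchi_poly l ((real s + x)/real m))"
    unfolding gen_Hs mult_thm[OF assms, of x l] by (simp add: sum_distrib_left mult_ac)
  show "real (n choose l) * genocchi_poly l x * acoef k (n - l) =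
    real (n choose l) * real m powi (int l - 1) *
      (\<Sum>j=1..n-l+1. \<Sum>s=0..m-1.
         (-1) ^ s * genocchi_poly l ((real s + x) / real m) *
         (1 / real j powi (k - 1)) * (stirling1 (n-l+1) j / real (n-l+1)))"
  proof -
    let ?G = "\<lambda>s. (-1) ^ s * genocchi_poly l ((real s + x) / real m)"
    let ?w = "\<lambda>j. (1 / real j powi (k - 1)) * (stirling1 (n-l+1) j / real (n-l+1))"
    have "(\<Sum>j=1..n-l+1. \<Sum>s=0..m-1. ?G s * (1 / real j powi (k - 1)) * (stirling1 (n-l+1) j / real (n-l+1)))
        = (\<Sum>j=1..n-l+1. \<Sum>s=0..m-1. ?G s * ?w j)"
      by (simp only: mult.assoc)
    also have "\<dots> = (\<Sum>s=0..m-1. \<Sum>j=1..n-l+1. ?G s * ?w j)"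
      by (rule sum.swap)
    also have "\<dots> = (\<Sum>s=0..m-1. ?G s) * (\<Sum>j=1..n-l+1. ?w j)"
      by (simp only: sum_product)
    also have "\<dots> = (\<Sum>s=0..m-1. ?G s) * acoef k (n - l)"
      unfolding acoef_def by simp
    finally show ?thesis unfolding g by (simp only: mult_ac)
  qed
qed

end
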